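(* Let $d\geq 2$ and let $\vec q=(q_0,\dots,q_{d-1})$ with $q_i\in[0,1)$ and $\sum_i q_i=1$. For a realization (as described in the context) define $$T(\vec q)=p(0|\overline{A},U)-\sum_{i=0}^{d-1}\big|p(i|\overline{A},\mathbb{1})-q_i\big|.$$ (i) For every realization, when the probabilities are computed with the absoluteness-of-measurement rule, $T(\vec q)\leq\max\{q_0,\dots,q_{d-1}\}$. (ii) There exists a realization for which, when the probabilities are computed with the non-absoluteness-of-measurement rule, $T(\vec q)=1$.
   Context: A realization consists of: a complex Hilbert space $\mathcal{H}_L$; an orthonormal basis $\{|\psi_i\rangle\}_{i=0}^{d-1}$ of $\mathbb{C}^d$ (the Friend's rank-one projective measurement $\overline{A}$); orthonormal vectors $\{|f_i\rangle\}_{i=0}^{d-1}\subset\mathcal{H}_L$; a unit vector $|\psi\rangle\in\mathbb{C}^d$; and a unitary $U$ on $\mathbb{C}^d\otimes\mathcal{H}_L$. Put $|F_i\rangle=|\psi_i\rangle\otimes|f_i\rangle$ and $\alpha_i=\langle\psi_i|\psi\rangle$. For $W\in\{\mathbb{1},U\}$: Absoluteness-of-measurement rule: $p(a|\overline{A},W)=\sum_i|\alpha_i|^2|\langle F_a|W|F_i\rangle|^2$. Non-absoluteness-of-measurement rule: $p(a|\overline{A},W)=\big|\langle F_a|W\sum_i\alpha_i|F_i\rangle\big|^2$. *)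

theory Defs
  imports "HOL-Analysis.Analysis"
begin

text \<open>Complex Hilbert spaces are modelled concretely as l2(I): square-summable
  functions I \<Rightarrow> complex (every complex Hilbert space is isometrically isomorphic
  to l2(I) for some index set I).\<close>

definition l2 :: "('a \<Rightarrow> complex) set" where
  "l2 = {f. (\<lambda>x. (cmod (f x))\<^sup>2) summable_on UNIV}"

definition cinner :: "('a \<Rightarrow> complex) \<Rightarrow> ('a \<Rightarrow> complex) \<Rightarrow> complex" where
  "cinner f g = (\<Sum>\<^sub>\<infinity>x. cnj (f x) * g x)"

definition Cd :: "nat \<Rightarrow> (nat \<Rightarrow> complex) set" where
  "Cd d = {v. \<forall>k\<ge>d. v k = 0}"

text \<open>C^d \<otimes> H_L  =  l2({0..d-1} \<times> I).\<close>
definition tensor_space :: "nat \<Rightarrow> (nat \<times> 'h \<Rightarrow> complex) set" where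
  "tensor_space d = {F. F \<in> l2 \<and> (\<forall>k x. k \<ge> d \<longrightarrow> F (k, x) = 0)}"

definition tensor :: "(nat \<Rightarrow> complex) \<Rightarrow> ('h \<Rightarrow> complex) \<Rightarrow> (nat \<times> 'h \<Rightarrow> complex)" where
  "tensor v f = (\<lambda>(k, x). v k * f x)"

definition orthonormal_family :: "'v set \<Rightarrow> ('v \<Rightarrow> 'v \<Rightarrow> complex) \<Rightarrow> nat \<Rightarrow> (nat \<Rightarrow> 'v) \<Rightarrow> bool" where
  "orthonormal_family S ip d e \<longleftrightarrow>
     (\<forall>i<d. e i \<in> S) \<and> (\<forall>i<d. \<forall>j<d. ip (e i) (e j) = (if i = j then 1 else 0))"

text \<open>Unitary operator on C^d \<otimes> H_L (only its action on that space matters).\<close>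
definition unitary_on :: "nat \<Rightarrow> ((nat \<times> 'h \<Rightarrow> complex) \<Rightarrow> (nat \<times> 'h \<Rightarrow> complex)) \<Rightarrow> bool" where
  "unitary_on d U \<longleftrightarrow>
     (\<forall>F\<in>tensor_space d. U F \<in> tensor_space d) \<and>
     (\<forall>F\<in>tensor_space d. \<forall>G\<in>tensor_space d. \<forall>a b.
        U (\<lambda>z. a * F z + b * G z) = (\<lambda>z. a * U F z + b * U G z)) \<and>
     (\<forall>F\<in>tensor_space d. \<forall>G\<in>tensor_space d. cinner (U F) (U G) = cinner F G) \<and>
     tensor_space d \<subseteq> U ` tensor_space d"

text \<open>A realization with lab space l2('h): d, basis psis, records fs, state psi, unitary U.\<close>
definition realization ::
  "nat \<Rightarrow> (nat \<Rightarrow> nat \<Rightarrow> complex) \<Rightarrow> (nat \<Rightarrow> 'h \<Rightarrow> complex) \<Rightarrow> (nat \<Rightarrow> complex)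
   \<Rightarrow> ((nat \<times> 'h \<Rightarrow> complex) \<Rightarrow> (nat \<times> 'h \<Rightarrow> complex)) \<Rightarrow> bool" where
  "realization d psis fs psi U \<longleftrightarrow>
     orthonormal_family (Cd d) cinner d psis \<and>
     orthonormal_family l2 cinner d fs \<and>
     psi \<in> Cd d \<and> cinner psi psi = 1 \<and>
     unitary_on d U"

definition Fvec :: "(nat \<Rightarrow> nat \<Rightarrow> complex) \<Rightarrow> (nat \<Rightarrow> 'h \<Rightarrow> complex) \<Rightarrow> nat \<Rightarrow> (nat \<times> 'h \<Rightarrow> complex)" where
  "Fvec psis fs i = tensor (psis i) (fs i)"

definition alpha :: "(nat \<Rightarrow> nat \<Rightarrow> complex) \<Rightarrow> (nat \<Rightarrow> complex) \<Rightarrow> nat \<Rightarrow> complex" where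
  "alpha psis psi i = cinner (psis i) psi"

definition p_abs ::
  "nat \<Rightarrow> (nat \<Rightarrow> nat \<Rightarrow> complex) \<Rightarrow> (nat \<Rightarrow> 'h \<Rightarrow> complex) \<Rightarrow> (nat \<Rightarrow> complex)
   \<Rightarrow> ((nat \<times> 'h \<Rightarrow> complex) \<Rightarrow> (nat \<times> 'h \<Rightarrow> complex)) \<Rightarrow> nat \<Rightarrow> real" where
  "p_abs d psis fs psi W a =
     (\<Sum>i<d. (cmod (alpha psis psi i))\<^sup>2 * (cmod (cinner (Fvec psis fs a) (W (Fvec psis fs i))))\<^sup>2)"

definition p_nonabs ::
  "nat \<Rightarrow> (nat \<Rightarrow> nat \<Rightarrow> complex) \<Rightarrow> (nat \<Rightarrow> 'h \<Rightarrow> complex) \<Rightarrow> (nat \<Rightarrow> complex)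
   \<Rightarrow> ((nat \<times> 'h \<Rightarrow> complex) \<Rightarrow> (nat \<times> 'h \<Rightarrow> complex)) \<Rightarrow> nat \<Rightarrow> real" where
  "p_nonabs d psis fs psi W a =
     (cmod (cinner (Fvec psis fs a) (W (\<lambda>z. \<Sum>i<d. alpha psis psi i * Fvec psis fs i z))))\<^sup>2"

text \<open>T(q) for a given probability rule p (p W a = p(a | A-bar, W)).\<close>
definition T_val :: "nat \<Rightarrow> (nat \<Rightarrow> real) \<Rightarrow> ('w \<Rightarrow> nat \<Rightarrow> real) \<Rightarrow> 'w \<Rightarrow> 'w \<Rightarrow> real" where
  "T_val d q p I U = p U 0 - (\<Sum>i<d. \<bar>p I i - q i\<bar>)"

end

theory Submission
  imports Defs
begin


lemma sq_sum_le: "(u+v)^2 \<le> 2*u^2 + 2*(v::real)^2"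
proof -
  have "0 \<le> (u-v)^2" by simp
  thus ?thesis by (simp add: power2_eq_square algebra_simps)
qed

lemma prod_le_sq: "2 * u * v \<le> u^2 + (v::real)^2"
proof -
  have "0 \<le> (u-v)^2" by simp
  moreover have "(u-v)^2 = u^2 + v^2 - 2 * u * v" by (simp add: power2_diff)
  ultimately show ?thesis by linarith
qed

lemma l2_sq: "f \<in> l2 \<Longrightarrow> (\<lambda>x. (cmod (f x))\<^sup>2) summable_on UNIV"
  by (simp add: l2_def)

lemma l2_lin:
  assumes "f \<in> l2" "g \<in> l2"
  shows "(\<lambda>x. a * f x + b * g x) \<in> l2"
proof -
  have sf: "(\<lambda>x. (cmod (f x))\<^sup>2) summable_on UNIV" and sg: "(\<lambda>x. (cmod (g x))\<^sup>2) summable_on UNIV"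
    using assms by (auto simp: l2_def)
  have s: "(\<lambda>x. 2*(cmod a)^2 * (cmod (f x))^2 + 2*(cmod b)^2*(cmod (g x))^2) summable_on UNIV"
    by (intro summable_on_add summable_on_cmult_right sf sg)
  have le: "(cmod (a * f x + b * g x))^2 \<le> 2*(cmod a)^2 * (cmod (f x))^2 + 2*(cmod b)^2*(cmod (g x))^2" for x
  proof -
    have "cmod (a*f x + b*g x) \<le> cmod a * cmod (f x) + cmod b * cmod (g x)"
      by (metis norm_triangle_ineq norm_mult)
    then have "(cmod (a*f x + b*g x))^2 \<le> (cmod a * cmod (f x) + cmod b * cmod (g x))^2"
      by (simp add: power_mono)
    also have "\<dots> \<le> 2*(cmod a * cmod (f x))^2 + 2*(cmod b * cmod (g x))^2" by (rule sq_sum_le)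
    finally show ?thesis by (simp add: power_mult_distrib)
  qed
  show ?thesis unfolding l2_def by (auto intro!: summable_on_comparison_test[OF s] le)
qed

lemma l2_zero: "(\<lambda>x. 0) \<in> l2" by (simp add: l2_def)

lemma cinner_summable:
  assumes "f \<in> l2" "g \<in> l2"
  shows "(\<lambda>x. cnj (f x) * g x) summable_on UNIV"
proof -
  have s: "(\<lambda>x. (cmod (f x))\<^sup>2 + (cmod (g x))\<^sup>2) summable_on UNIV"
    using assms by (intro summable_on_add) (auto simp: l2_def)
  note s' = summable_on_iff_abs_summable_on_real[THEN iffD1, OF s]
  have "(\<lambda>x. norm (cnj (f x) * g x)) summable_on UNIV"
  proof (rule Infinite_Sum.abs_summable_on_comparison_test[OF s'])
    fix x
    have "cmod (f x) * cmod (g x) \<le> (cmod (f x))\<^sup>2 + (cmod (g x))\<^sup>2"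
    proof -
      have "0 \<le> cmod (f x) * cmod (g x)" by simp
      thus ?thesis using prod_le_sq[of "cmod (f x)" "cmod (g x)"] by linarith
    qed
    moreover have "norm (cnj (f x) * g x) = cmod (f x) * cmod (g x)" by (simp add: norm_mult)
    moreover have "norm ((cmod (f x))\<^sup>2 + (cmod (g x))\<^sup>2) = (cmod (f x))\<^sup>2 + (cmod (g x))\<^sup>2" by simp
    ultimately show "norm (cnj (f x) * g x) \<le> norm ((cmod (f x))\<^sup>2 + (cmod (g x))\<^sup>2)"
      by simp
  qed
  thus ?thesis by (rule abs_summable_summable)
qed

lemma cinner_lin_right:
  assumes "f \<in> l2" "g \<in> l2" "h \<in> l2"
  shows "cinner f (\<lambda>x. a * g x + b * h x) = a * cinner f g + b * cinner f h"
proof -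
  have "(\<lambda>x. cnj (f x) * (a * g x + b * h x)) = (\<lambda>x. a * (cnj (f x) * g x) + b * (cnj (f x) * h x))"
    by (auto simp: algebra_simps)
  moreover have "infsum (\<lambda>x. a * (cnj (f x) * g x) + b * (cnj (f x) * h x)) UNIV
     = a * infsum (\<lambda>x. cnj (f x) * g x) UNIV + b * infsum (\<lambda>x. cnj (f x) * h x) UNIV"
    using cinner_summable[OF assms(1,2)] cinner_summable[OF assms(1,3)]
    by (simp add: infsum_add summable_on_cmult_right infsum_cmult_right)
  ultimately show ?thesis unfolding cinner_def by simp
qed

lemma cinner_conj: "cinner g f = cnj (cinner f g)"
  unfolding cinner_def infsum_cnj[symmetric] by (simp add: mult.commute)

lemma cinner_lin_left:
  assumes "f \<in> l2" "g \<in> l2" "h \<in> l2"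
  shows "cinner (\<lambda>x. a * g x + b * h x) f = cnj a * cinner g f + cnj b * cinner h f"
proof -
  have "cinner (\<lambda>x. a * g x + b * h x) f = cnj (cinner f (\<lambda>x. a * g x + b * h x))"
    by (rule cinner_conj)
  also have "\<dots> = cnj a * cnj (cinner f g) + cnj b * cnj (cinner f h)"
    unfolding cinner_lin_right[OF assms] by simp
  also have "\<dots> = cnj a * cinner g f + cnj b * cinner h f"
    by (simp only: cinner_conj[of g f] cinner_conj[of h f])
  finally show ?thesis .
qed

lemma cinner_sum_right:
  assumes "finite S" "f \<in> l2" "\<And>i. i\<in>S \<Longrightarrow> h i \<in> l2"
  shows "(\<lambda>x. \<Sum>i\<in>S. c i * h i x) \<in> l2 \<and> cinner f (\<lambda>x. \<Sum>i\<in>S. c i * h i x) = (\<Sum>i\<in>S. c i * cinner f (h i))"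
  using assms
proof (induction S rule: finite_induct)
  case empty
  then show ?case by (simp add: l2_zero cinner_def)
next
  case (insert j S)
  have eq: "(\<lambda>x. \<Sum>i\<in>insert j S. c i * h i x) = (\<lambda>x. c j * h j x + 1 * (\<Sum>i\<in>S. c i * h i x))"
    using insert by simp
  from insert have IH: "(\<lambda>x. \<Sum>i\<in>S. c i * h i x) \<in> l2"
     "cinner f (\<lambda>x. \<Sum>i\<in>S. c i * h i x) = (\<Sum>i\<in>S. c i * cinner f (h i))" by auto
  have hj: "h j \<in> l2" using insert by auto
  have A: "(\<lambda>x. c j * h j x + 1 * (\<Sum>i\<in>S. c i * h i x)) \<in> l2"
    by (rule l2_lin[OF hj IH(1)])
  have B: "cinner f (\<lambda>x. c j * h j x + 1 * (\<Sum>i\<in>S. c i * h i x)) = (\<Sum>i\<in>insert j S. c i * cinner f (h i))"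
    using cinner_lin_right[OF insert.prems(1) hj IH(1), of "c j" 1] IH(2) insert by simp
  show ?case unfolding eq using A B by blast
qed

lemma cinner_self:
  assumes "f \<in> l2"
  shows "cinner f f = of_real (infsum (\<lambda>x. (cmod (f x))\<^sup>2) UNIV)"
proof -
  have s: "(\<lambda>x. cnj (f x) * f x) summable_on UNIV" by (rule cinner_summable[OF assms assms])
  have e: "cnj (f x) * f x = of_real ((cmod (f x))\<^sup>2)" for x
    using complex_norm_square[of "f x"] by (simp add: mult.commute)
  show ?thesis
  proof (rule complex_eqI)
    show "Re (cinner f f) = Re (of_real (infsum (\<lambda>x. (cmod (f x))\<^sup>2) UNIV))"
      unfolding cinner_def using infsum_Re[OF s] by (simp add: e)
    show "Im (cinner f f) = Im (of_real (infsum (\<lambda>x. (cmod (f x))\<^sup>2) UNIV))"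
      unfolding cinner_def using infsum_Im[OF s] by (simp add: e)
  qed
qed

lemma cinner_self_Re: "f \<in> l2 \<Longrightarrow> Re (cinner f f) \<ge> 0"
  by (simp add: cinner_self infsum_nonneg)

lemma cinner_self_real: "f \<in> l2 \<Longrightarrow> cinner f f = of_real (Re (cinner f f))"
  by (simp add: cinner_self)

lemma bessel:
  fixes d :: nat
  assumes G: "G \<in> l2" and E: "\<forall>i<d. E i \<in> l2"
    and on: "\<forall>i<d. \<forall>j<d. cinner (E i) (E j) = (if i = j then 1 else 0)"
  shows "(\<Sum>i<d. (cmod (cinner (E i) G))\<^sup>2) \<le> Re (cinner G G)"
proof -
  define c where "c i = cinner (E i) G" for i
  define S where "S = (\<lambda>x. \<Sum>i<d. c i * E i x)"
  define R where "R = (\<lambda>x. 1 * G x + (-1) * S x)"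
  have SS: "S \<in> l2" unfolding S_def using cinner_sum_right[OF finite_lessThan[of d], of G E c] G E by auto
  have RR: "R \<in> l2" unfolding R_def using l2_lin[OF G SS] .
  have ES: "cinner (E i) S = c i" if "i < d" for i
  proof -
    have "cinner (E i) S = (\<Sum>j<d. c j * cinner (E i) (E j))"
      unfolding S_def using cinner_sum_right[OF finite_lessThan[of d], of "E i" E c] E that by auto
    also have "\<dots> = (\<Sum>j<d. c j * (if i = j then 1 else 0))"
      using on that by (intro sum.cong refl) simp
    also have "\<dots> = c i" using that by (simp add: if_distrib cong: if_cong)
    finally show ?thesis .
  qed
  have RE: "cinner R (E i) = 0" if "i < d" for i
  proof -
    have "cinner (E i) R = cinner (E i) G - cinner (E i) S"
      unfolding R_def using cinner_lin_right[OF _ G SS, of "E i" 1 "-1"] E that by simp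
    hence "cinner (E i) R = 0" using ES[OF that] c_def by simp
    thus ?thesis using cinner_conj[of R "E i"] by simp
  qed
  have RS: "cinner R S = 0"
  proof -
    have "cinner R S = (\<Sum>i<d. c i * cinner R (E i))"
      unfolding S_def using cinner_sum_right[OF finite_lessThan[of d], of R E c] E RR by auto
    thus ?thesis using RE by simp
  qed
  have GS: "cinner G S = (\<Sum>i<d. of_real ((cmod (c i))\<^sup>2))"
  proof -
    have "cinner G S = (\<Sum>i<d. c i * cinner G (E i))"
      unfolding S_def using cinner_sum_right[OF finite_lessThan[of d], of G E c] E G by auto
    also have "\<dots> = (\<Sum>i<d. of_real ((cmod (c i))\<^sup>2))"
    proof (intro sum.cong refl)
      fix i
      have "cinner G (E i) = cnj (c i)" unfolding c_def by (rule cinner_conj)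
      thus "c i * cinner G (E i) = of_real ((cmod (c i))\<^sup>2)"
        using complex_norm_square[of "c i"] by simp
    qed
    finally show ?thesis .
  qed
  have RR2: "cinner R R = cinner R G - cinner R S"
    unfolding R_def[of] using cinner_lin_right[OF RR G SS, of 1 "-1"] by (simp add: R_def)
  have RG: "cinner R G = cnj (cinner G G - cinner G S)"
  proof -
    have "cinner G R = cinner G G - cinner G S"
      unfolding R_def using cinner_lin_right[OF G G SS, of 1 "-1"] by simp
    thus ?thesis using cinner_conj[of R G] by simp
  qed
  have "cinner R R = cnj (cinner G G) - (\<Sum>i<d. of_real ((cmod (c i))\<^sup>2))"
    using RR2 RG RS GS by simp
  hence "Re (cinner R R) = Re (cinner G G) - (\<Sum>i<d. (cmod (c i))\<^sup>2)"
    by (simp add: Re_sum)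
  thus ?thesis using cinner_self_Re[OF RR] c_def by simp
qed



definition slice :: "nat \<Rightarrow> ('h \<Rightarrow> complex) \<Rightarrow> nat \<times> 'h \<Rightarrow> complex" where
  "slice k f = (\<lambda>z. if fst z = k then f (snd z) else 0)"

lemma slice_range: "z \<notin> range (Pair k) \<Longrightarrow> fst z \<noteq> k"
proof
  assume "fst z = k" "z \<notin> range (Pair k)"
  moreover have "z = Pair (fst z) (snd z)" by simp
  ultimately show False by (metis rangeI)
qed

lemma slice_sum:
  fixes \<phi> :: "'h \<Rightarrow> 'b::{comm_monoid_add,t2_space}"
  shows "infsum (\<lambda>z. if fst z = k then \<phi> (snd z) else 0) UNIV = infsum \<phi> UNIV"
proof -
  have "infsum (\<lambda>z. if fst z = k then \<phi> (snd z) else 0) UNIV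
      = infsum (\<lambda>z. if fst z = k then \<phi> (snd z) else 0) (range (Pair k))"
    by (rule infsum_cong_neutral) (auto dest: slice_range)
  also have "\<dots> = infsum ((\<lambda>z. if fst z = k then \<phi> (snd z) else 0) \<circ> Pair k) UNIV"
    by (rule infsum_reindex) (auto simp: inj_on_def)
  finally show ?thesis by (simp add: o_def)
qed

lemma slice_summable:
  fixes \<phi> :: "'h \<Rightarrow> 'b::{comm_monoid_add,t2_space}"
  shows "(\<lambda>z. if fst z = k then \<phi> (snd z) else 0) summable_on UNIV \<longleftrightarrow> \<phi> summable_on UNIV"
proof -
  have "(\<lambda>z. if fst z = k then \<phi> (snd z) else 0) summable_on UNIV
      \<longleftrightarrow> (\<lambda>z. if fst z = k then \<phi> (snd z) else 0) summable_on (range (Pair k))"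
    by (rule summable_on_cong_neutral) (auto dest: slice_range)
  also have "\<dots> \<longleftrightarrow> ((\<lambda>z. if fst z = k then \<phi> (snd z) else 0) \<circ> Pair k) summable_on UNIV"
    by (rule summable_on_reindex) (auto simp: inj_on_def)
  finally show ?thesis by (simp add: o_def)
qed

lemma slice_l2: "f \<in> l2 \<Longrightarrow> slice k f \<in> l2"
proof -
  assume f: "f \<in> l2"
  have "(\<lambda>z. (cmod (slice k f z))\<^sup>2) = (\<lambda>z. if fst z = k then (cmod (f (snd z)))\<^sup>2 else 0)"
    by (auto simp: slice_def)
  thus ?thesis using f slice_summable[of k "\<lambda>x. (cmod (f x))\<^sup>2"] unfolding l2_def by simp
qed

lemma cinner_slice:
  "cinner (slice j f) (slice k g) = (if j = k then cinner f g else 0)"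
proof -
  have eq: "(\<lambda>z. cnj (slice j f z) * slice k g z)
      = (\<lambda>z. if fst z = j then (if j = k then cnj (f (snd z)) * g (snd z) else 0) else 0)"
    by (auto simp: slice_def)
  show ?thesis
  proof (cases "j = k")
    case True
    have "cinner (slice j f) (slice k g) = infsum (\<lambda>z. if fst z = k then cnj (f (snd z)) * g (snd z) else 0) UNIV"
      unfolding cinner_def eq using True by (intro infsum_cong) auto
    thus ?thesis using True slice_sum[of k "\<lambda>x. cnj (f x) * g x"] by (simp add: cinner_def)
  next
    case False
    thus ?thesis unfolding cinner_def eq using False by (simp cong: if_cong)
  qed
qed

lemma tensor_slice:
  assumes "u \<in> Cd d"
  shows "tensor u f = (\<lambda>z. \<Sum>k<d. u k * slice k f z)"
proof
  fix z :: "nat \<times> 'a"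
  obtain a b where z: "z = (a, b)" by fastforce
  show "tensor u f z = (\<Sum>k<d. u k * slice k f z)"
  proof (cases "a < d")
    case True
    have "(\<Sum>k<d. u k * slice k f z) = (\<Sum>k<d. if k = a then u a * f b else 0)"
      by (intro sum.cong refl) (auto simp: slice_def z)
    also have "\<dots> = u a * f b" using True by simp
    finally show ?thesis by (simp add: tensor_def z)
  next
    case False
    hence "u a = 0" using assms by (auto simp: Cd_def)
    moreover have "(\<Sum>k<d. u k * slice k f z) = 0"
      using False by (intro sum.neutral) (auto simp: slice_def z)
    ultimately show ?thesis by (simp add: tensor_def z)
  qed
qed

lemma tensor_l2:
  assumes "u \<in> Cd d" "f \<in> l2"
  shows "tensor u f \<in> tensor_space d"
proof -
  have "(\<lambda>z. \<Sum>k<d. u k * slice k f z) \<in> l2"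
    using cinner_sum_right[OF finite_lessThan[of d] l2_zero, of "\<lambda>k. slice k f" u] slice_l2[OF assms(2)]
    by auto
  moreover have "tensor u f (k, x) = 0" if "k \<ge> d" for k x
    using assms(1) that by (auto simp: tensor_def Cd_def)
  ultimately show ?thesis unfolding tensor_space_def tensor_slice[OF assms(1)] by auto
qed

lemma cinner_fin:
  assumes "finite A" "\<And>z. z \<notin> A \<Longrightarrow> f z = 0"
  shows "cinner f g = (\<Sum>z\<in>A. cnj (f z) * g z)"
proof -
  have "infsum (\<lambda>z. cnj (f z) * g z) UNIV = infsum (\<lambda>z. cnj (f z) * g z) A"
    by (rule infsum_cong_neutral) (auto simp: assms)
  thus ?thesis unfolding cinner_def using assms by simp
qed

lemma l2_fin:
  assumes "finite A" "\<And>z. z \<notin> A \<Longrightarrow> f z = 0"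
  shows "f \<in> l2"
proof -
  have "(\<lambda>z. (cmod (f z))\<^sup>2) summable_on UNIV \<longleftrightarrow> (\<lambda>z. (cmod (f z))\<^sup>2) summable_on A"
    by (rule summable_on_cong_neutral) (auto simp: assms)
  thus ?thesis unfolding l2_def using assms by simp
qed

lemma cinner_Cd: "u \<in> Cd d \<Longrightarrow> cinner u v = (\<Sum>k<d. cnj (u k) * v k)"
  by (rule cinner_fin) (auto simp: Cd_def)

lemma cinner_tensor:
  assumes u: "u \<in> Cd d" and v: "v \<in> Cd d" and f: "f \<in> l2" and g: "g \<in> l2"
  shows "cinner (tensor u f) (tensor v g) = cinner u v * cinner f g"
proof -
  have T: "tensor u f \<in> l2" using tensor_l2[OF u f] by (simp add: tensor_space_def)
  have "cinner (tensor u f) (tensor v g) = (\<Sum>k<d. v k * cinner (tensor u f) (slice k g))"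
    unfolding tensor_slice[OF v]
    using cinner_sum_right[OF finite_lessThan[of d] T, of "\<lambda>k. slice k g" v] slice_l2[OF g] by auto
  also have "\<dots> = (\<Sum>k<d. v k * (cnj (u k) * cinner f g))"
  proof (intro sum.cong refl)
    fix k assume k: "k \<in> {..<d}"
    have "cinner (slice k g) (tensor u f) = (\<Sum>j<d. u j * cinner (slice k g) (slice j f))"
      unfolding tensor_slice[OF u]
      using cinner_sum_right[OF finite_lessThan[of d] slice_l2[OF g], of "\<lambda>j. slice j f" u] slice_l2[OF f] by auto
    also have "\<dots> = (\<Sum>j<d. if j = k then u k * cinner g f else 0)"
      by (intro sum.cong refl) (auto simp: cinner_slice)
    also have "\<dots> = u k * cinner g f" using k by simp
    finally have "cinner (slice k g) (tensor u f) = u k * cinner g f" .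
    hence "cinner (tensor u f) (slice k g) = cnj (u k * cinner g f)"
      using cinner_conj[of "tensor u f" "slice k g"] by simp
    also have "\<dots> = cnj (u k) * cinner f g" using cinner_conj[of f g] by simp
    finally show "v k * cinner (tensor u f) (slice k g) = v k * (cnj (u k) * cinner f g)" by simp
  qed
  also have "\<dots> = (\<Sum>k<d. (cnj (u k) * v k) * cinner f g)"
    by (intro sum.cong refl) (simp add: mult_ac)
  also have "\<dots> = (\<Sum>k<d. cnj (u k) * v k) * cinner f g"
    by (simp only: sum_distrib_right)
  finally show ?thesis using cinner_Cd[OF u] by simp
qed

lemma ts_lin:
  assumes "F \<in> tensor_space d" "G \<in> tensor_space d"
  shows "(\<lambda>z. a * F z + b * G z) \<in> tensor_space d"
  using assms l2_lin[of F G a b] by (auto simp: tensor_space_def)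

lemma cinner_delta: "cinner (\<lambda>z. if z = p then 1 else 0) g = g p"
  by (subst cinner_fin[of "{p}"]) auto

lemma cinner_delta': "cinner g (\<lambda>z. if z = p then 1 else 0) = cnj (g p)"
proof -
  have "cinner g (\<lambda>z. if z = p then 1 else 0) = cnj (cinner (\<lambda>z. if z = p then 1 else 0) g)"
    by (rule cinner_conj)
  thus ?thesis by (simp only: cinner_delta)
qed



definition hh :: "('a \<Rightarrow> complex) \<Rightarrow> ('a \<Rightarrow> complex) \<Rightarrow> ('a \<Rightarrow> complex)" where
  "hh w F = (\<lambda>z. 1 * F z + (- (2 * cinner w F / cinner w w)) * w z)"

lemma hh_l2: "w \<in> l2 \<Longrightarrow> F \<in> l2 \<Longrightarrow> hh w F \<in> l2"
  unfolding hh_def by (rule l2_lin)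

lemma hh_inner:
  assumes w: "w \<in> l2" and F: "F \<in> l2" and G: "G \<in> l2" and t: "cinner w w \<noteq> 0"
  shows "cinner (hh w F) (hh w G) = cinner F G"
proof -
  define t where "t = cinner w w"
  define a where "a = cinner w F"
  define b where "b = cinner w G"
  have ct: "cnj t = t" unfolding t_def using cinner_self_real[OF w] by (metis complex_cnj_complex_of_real)
  have t0: "t \<noteq> 0" using t t_def by simp
  have HG: "hh w G \<in> l2" by (rule hh_l2[OF w G])
  have "cinner (hh w F) (hh w G) = cnj 1 * cinner F (hh w G) + cnj (- (2 * a / t)) * cinner w (hh w G)"
    unfolding hh_def[of w F] a_def t_def by (rule cinner_lin_left[OF HG F w])
  also have "cinner F (hh w G) = 1 * cinner F G + (- (2 * b / t)) * cinner F w"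
    unfolding hh_def b_def t_def by (rule cinner_lin_right[OF F G w])
  also have "cinner w (hh w G) = 1 * b + (- (2 * b / t)) * t"
    unfolding hh_def b_def t_def by (rule cinner_lin_right[OF w G w])
  also have "cinner F w = cnj a" unfolding a_def by (rule cinner_conj)
  finally have "cinner (hh w F) (hh w G) = cnj 1 * (1 * cinner F G + (- (2 * b / t)) * cnj a)
      + cnj (- (2 * a / t)) * (1 * b + (- (2 * b / t)) * t)" .
  also have "\<dots> = cinner F G - 2 * b * cnj a / t - 2 * cnj a / t * (b - 2 * b)"
    using t0 ct by (simp add: field_simps)
  also have "\<dots> = cinner F G" using t0 by (simp add: field_simps)
  finally show ?thesis .
qed

lemma hh_lin:
  assumes w: "w \<in> l2" and F: "F \<in> l2" and G: "G \<in> l2"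
  shows "hh w (\<lambda>z. a * F z + b * G z) = (\<lambda>z. a * hh w F z + b * hh w G z)"
proof -
  have e: "cinner w (\<lambda>z. a * F z + b * G z) = a * cinner w F + b * cinner w G"
    by (rule cinner_lin_right[OF w F G])
  show ?thesis unfolding hh_def e
    by (rule ext) (simp add: algebra_simps add_divide_distrib)
qed

lemma hh_invol:
  assumes w: "w \<in> l2" and F: "F \<in> l2" and t: "cinner w w \<noteq> 0"
  shows "hh w (hh w F) = F"
proof -
  have "cinner w (hh w F) = 1 * cinner w F + (- (2 * cinner w F / cinner w w)) * cinner w w"
    unfolding hh_def by (rule cinner_lin_right[OF w F w])
  hence e: "cinner w (hh w F) = - cinner w F" using t by (simp add: field_simps)
  show ?thesis unfolding hh_def[of w "hh w F"] e by (rule ext) (simp add: hh_def)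
qed

lemma hh_unitary:
  fixes w :: "nat \<times> 'h \<Rightarrow> complex"
  assumes w: "w \<in> tensor_space d" and t: "cinner w w \<noteq> 0"
  shows "unitary_on d (hh w)"
proof -
  have wl: "w \<in> l2" using w by (simp add: tensor_space_def)
  have l: "F \<in> tensor_space d \<Longrightarrow> F \<in> l2" for F :: "nat \<times> 'h \<Rightarrow> complex" by (simp add: tensor_space_def)
  have in_ts: "hh w F \<in> tensor_space d" if "F \<in> tensor_space d" for F :: "nat \<times> 'h \<Rightarrow> complex"
    unfolding hh_def by (rule ts_lin[OF that w])
  show ?thesis unfolding unitary_on_def
  proof (intro conjI ballI allI subsetI)
    fix F :: "nat \<times> 'h \<Rightarrow> complex" assume "F \<in> tensor_space d" thus "hh w F \<in> tensor_space d" by (rule in_ts)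
  next
    fix F G :: "nat \<times> 'h \<Rightarrow> complex" and a b assume "F \<in> tensor_space d" "G \<in> tensor_space d"
    thus "hh w (\<lambda>z. a * F z + b * G z) = (\<lambda>z. a * hh w F z + b * hh w G z)"
      using hh_lin[OF wl] l by blast
  next
    fix F G :: "nat \<times> 'h \<Rightarrow> complex" assume "F \<in> tensor_space d" "G \<in> tensor_space d"
    thus "cinner (hh w F) (hh w G) = cinner F G" using hh_inner[OF wl _ _ t] l by blast
  next
    fix F :: "nat \<times> 'h \<Rightarrow> complex" assume F: "F \<in> tensor_space d"
    hence "F = hh w (hh w F)" using hh_invol[OF wl _ t] l by metis
    thus "F \<in> hh w ` tensor_space d" using in_ts[OF F] by blast
  qed
qed



lemma real_part:
  fixes P c q :: "nat \<Rightarrow> real"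
  assumes c0: "\<forall>i<d. 0 \<le> c i" and cs: "(\<Sum>i<d. c i) \<le> 1" and qM: "\<forall>i<d. q i \<le> M" and M0: "0 \<le> M"
  shows "(\<Sum>i<d. P i * c i) - (\<Sum>i<d. \<bar>P i - q i\<bar>) \<le> M"
proof -
  have tm: "P i * c i \<le> M * c i + \<bar>P i - q i\<bar>" if i: "i < d" for i
  proof -
    have c1: "c i \<le> 1" using member_le_sum[of i "{..<d}" c] c0 cs i by auto
    have "P i \<le> q i + \<bar>P i - q i\<bar>" by linarith
    hence "P i * c i \<le> (q i + \<bar>P i - q i\<bar>) * c i" using c0 i by (simp add: mult_right_mono)
    also have "\<dots> = q i * c i + \<bar>P i - q i\<bar> * c i" by (simp add: algebra_simps)
    also have "q i * c i \<le> M * c i" using qM c0 i by (simp add: mult_right_mono)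
    also have "\<bar>P i - q i\<bar> * c i \<le> \<bar>P i - q i\<bar>" using c1 by (simp add: mult_left_le)
    finally show ?thesis by simp
  qed
  have "(\<Sum>i<d. P i * c i) \<le> (\<Sum>i<d. M * c i + \<bar>P i - q i\<bar>)" by (rule sum_mono) (use tm in auto)
  also have "\<dots> = M * (\<Sum>i<d. c i) + (\<Sum>i<d. \<bar>P i - q i\<bar>)" by (simp add: sum.distrib sum_distrib_left)
  also have "M * (\<Sum>i<d. c i) \<le> M" using cs M0 by (simp add: mult_left_le)
  finally show ?thesis by simp
qed

lemma part1:
  fixes d :: nat and q :: "nat \<Rightarrow> real" and psis :: "nat \<Rightarrow> nat \<Rightarrow> complex" and fs :: "nat \<Rightarrow> 'h \<Rightarrow> complex"
  assumes d: "d \<ge> 2" and q: "\<forall>i<d. 0 \<le> q i \<and> q i < 1"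
    and R: "realization d psis fs psi U"
  shows "T_val d q (p_abs d psis fs psi) id U \<le> Max (q ` {..<d})"
proof -
  have ps: "orthonormal_family (Cd d) cinner d psis" and fo: "orthonormal_family l2 cinner d fs"
    and U: "unitary_on d U" using R by (auto simp: realization_def)
  define F where "F i = Fvec psis fs i" for i
  have FT: "F i \<in> tensor_space d" if "i < d" for i
    unfolding F_def Fvec_def using ps fo that by (intro tensor_l2) (auto simp: orthonormal_family_def)
  have Fl: "F i \<in> l2" if "i < d" for i using FT[OF that] by (simp add: tensor_space_def)
  have FO: "cinner (F i) (F j) = (if i = j then 1 else 0)" if "i < d" "j < d" for i j
    unfolding F_def Fvec_def using ps fo that
    by (subst cinner_tensor[of _ d]) (auto simp: orthonormal_family_def)
  define P where "P i = (cmod (alpha psis psi i))\<^sup>2" for i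
  define c where "c i = (cmod (cinner (F 0) (U (F i))))\<^sup>2" for i
  have d0: "0 < d" using d by simp
  have pid: "p_abs d psis fs psi id a = P a" if a: "a < d" for a
  proof -
    have "p_abs d psis fs psi id a = (\<Sum>i<d. if i = a then P a else 0)"
      unfolding p_abs_def by (intro sum.cong refl) (auto simp: FO[OF a] P_def F_def[symmetric])
    thus ?thesis using a by simp
  qed
  have pU: "p_abs d psis fs psi U 0 = (\<Sum>i<d. P i * c i)"
    unfolding p_abs_def P_def c_def F_def ..
  define E where "E i = U (F i)" for i
  have EL: "\<forall>i<d. E i \<in> l2" using U FT unfolding E_def unitary_on_def tensor_space_def by blast
  have EO: "\<forall>i<d. \<forall>j<d. cinner (E i) (E j) = (if i = j then 1 else 0)"
    using U FT FO unfolding E_def unitary_on_def by auto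
  have B: "(\<Sum>i<d. (cmod (cinner (E i) (F 0)))\<^sup>2) \<le> Re (cinner (F 0) (F 0))"
    by (rule bessel[OF Fl[OF d0] EL EO])
  have ceq: "c i = (cmod (cinner (E i) (F 0)))\<^sup>2" for i
    unfolding c_def E_def using cinner_conj[of "F 0" "U (F i)"] by simp
  have cs: "(\<Sum>i<d. c i) \<le> 1" using B FO[OF d0 d0] by (simp add: ceq)
  have c0: "\<forall>i<d. 0 \<le> c i" by (simp add: c_def)
  have qM: "\<forall>i<d. q i \<le> Max (q ` {..<d})" by simp
  have M0: "0 \<le> Max (q ` {..<d})"
  proof -
    have "q 0 \<le> Max (q ` {..<d})" using qM d0 by blast
    moreover have "0 \<le> q 0" using q d0 by blast
    ultimately show ?thesis by linarith
  qed
  have "T_val d q (p_abs d psis fs psi) id U = (\<Sum>i<d. P i * c i) - (\<Sum>i<d. \<bar>P i - q i\<bar>)"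
    unfolding T_val_def pU by (simp add: pid)
  also have "\<dots> \<le> Max (q ` {..<d})" by (rule real_part[OF c0 cs qM M0])
  finally show ?thesis .
qed



lemma part2:
  fixes d :: nat and q :: "nat \<Rightarrow> real"
  assumes d: "d \<ge> 2"
    and q: "\<forall>i<d. 0 \<le> q i \<and> q i < 1"
    and qs: "(\<Sum>i<d. q i) = 1"
  shows "\<exists>(psis :: nat \<Rightarrow> nat \<Rightarrow> complex) (fs :: nat \<Rightarrow> nat \<Rightarrow> complex) psi U.
            realization d psis fs psi U \<and>
            T_val d q (p_nonabs d psis fs psi) id U = 1"
proof -
  define e :: "nat \<Rightarrow> nat \<Rightarrow> complex" where "e i = (\<lambda>k. if k = i then 1 else 0)" for i
  define s where "s i = complex_of_real (sqrt (q i))" for i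
  define psi where "psi = (\<lambda>k. if k < d then s k else 0)"
  define dl :: "nat \<times> nat \<Rightarrow> nat \<times> nat \<Rightarrow> complex" where "dl p = (\<lambda>z. if z = p then 1 else 0)" for p
  define v where "v = (\<lambda>z. \<Sum>i<d. s i * dl (i,i) z)"
  define w where "w = (\<lambda>z. 1 * v z + (-1) * dl (0,0) z)"
  have d0: "0 < d" using d by simp
  have Fv: "Fvec e e i = dl (i,i)" for i
    by (rule ext) (auto simp: Fvec_def tensor_def e_def dl_def split: prod.split)
  have al: "alpha e psi i = s i" if "i < d" for i
    unfolding alpha_def e_def using that by (simp add: cinner_delta psi_def)
  have veq: "(\<lambda>z. \<Sum>i<d. alpha e psi i * Fvec e e i z) = v"
    unfolding v_def by (rule ext, rule sum.cong) (auto simp: al Fv)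
  have vd: "v (j,j) = s j" if "j < d" for j
  proof -
    have "v (j,j) = (\<Sum>i<d. if i = j then s j else 0)"
      unfolding v_def by (intro sum.cong refl) (auto simp: dl_def)
    thus ?thesis using that by simp
  qed
  have vz: "v z = 0" if "z \<notin> (\<lambda>i. (i,i)) ` {..<d}" for z
  proof -
    have "\<forall>i<d. dl (i,i) z = 0" using that unfolding dl_def by auto
    thus ?thesis unfolding v_def by simp
  qed
  have vl: "v \<in> l2" by (rule l2_fin[OF finite_imageI[OF finite_lessThan] vz])
  have vT: "v \<in> tensor_space d"
  proof -
    have "v (k,x) = 0" if "k \<ge> d" for k x using that by (intro vz) auto
    thus ?thesis unfolding tensor_space_def using vl by blast
  qed
  have dlT: "dl (i,i) \<in> tensor_space d" if "i < d" for i
    unfolding tensor_space_def using that l2_fin[of "{(i,i)}" "dl (i,i)"] by (auto simp: dl_def)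
  have dll: "dl p \<in> l2" for p using l2_fin[of "{p}" "dl p"] by (auto simp: dl_def)
  have ssq: "s i * cnj (s i) = of_real (q i)" if "i < d" for i
  proof -
    have "0 \<le> q i" using q that by auto
    hence "sqrt (q i) * sqrt (q i) = q i" by simp
    thus ?thesis unfolding s_def by (metis complex_cnj_complex_of_real of_real_mult)
  qed
  have cmods: "(cmod (s i))\<^sup>2 = q i" if "i < d" for i
    using q that by (simp add: s_def)
  have cvd: "cinner (dl p) g = g p" for p g unfolding dl_def by (rule cinner_delta)
  have cvd': "cinner g (dl p) = cnj (g p)" for p g unfolding dl_def by (rule cinner_delta')
  have vv: "cinner v v = 1"
  proof -
    have "cinner v v = (\<Sum>i<d. s i * cinner v (dl (i,i)))"
      unfolding v_def[of] using cinner_sum_right[OF finite_lessThan[of d] vl, of "\<lambda>i. dl (i,i)" s] dll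
      by (simp add: v_def)
    also have "\<dots> = (\<Sum>i<d. of_real (q i))"
      by (intro sum.cong refl) (simp add: cvd' vd ssq)
    also have "\<dots> = 1" using qs by (metis of_real_1 of_real_sum)
    finally show ?thesis .
  qed
  have s0: "s 0 \<noteq> 1"
  proof
    assume "s 0 = 1"
    hence "sqrt (q 0) = 1" by (simp add: s_def)
    hence "q 0 = 1" by simp
    thus False using q d0 by auto
  qed
  have cs0: "cnj (s 0) = s 0" by (simp add: s_def)
  have wv: "cinner w v = 1 - s 0"
    unfolding w_def using cinner_lin_left[OF vl vl dll, of 1 "-1"] by (simp add: vv cvd vd d0)
  have wd: "cinner w (dl (0,0)) = s 0 - 1"
    unfolding cvd' w_def by (simp add: vd d0 dl_def cs0)
  have wl: "w \<in> l2" unfolding w_def by (rule l2_lin[OF vl dll])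
  have "cinner w (\<lambda>z. 1 * v z + (-1) * dl (0,0) z) = 1 * cinner w v + (-1) * cinner w (dl (0,0))"
    by (rule cinner_lin_right[OF wl vl dll])
  hence "cinner w w = 1 * cinner w v + (-1) * cinner w (dl (0,0))"
    unfolding w_def[symmetric] .
  hence ww: "cinner w w = 2 - 2 * s 0" by (simp add: wv wd)
  have ww0: "cinner w w \<noteq> 0" using ww s0 by auto
  have wT: "w \<in> tensor_space d" unfolding w_def by (rule ts_lin[OF vT dlT[OF d0]])
  have hv: "hh w v = dl (0,0)"
  proof -
    have "2 * (1 - s 0) / (2 - 2 * s 0) = 1" using s0 by (simp add: field_simps)
    thus ?thesis unfolding hh_def wv ww by (rule_tac ext) (simp add: w_def)
  qed
  have R: "realization d e e psi (hh w)"
    unfolding realization_def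
  proof (intro conjI)
    show "orthonormal_family (Cd d) cinner d e"
      unfolding orthonormal_family_def Cd_def e_def by (auto simp: cinner_delta)
    show "orthonormal_family l2 cinner d e"
    proof -
      have "e i \<in> l2" for i unfolding e_def by (rule l2_fin[of "{i}"]) auto
      thus ?thesis unfolding orthonormal_family_def e_def by (auto simp: cinner_delta)
    qed
    show "psi \<in> Cd d" by (simp add: Cd_def psi_def)
    have "cinner psi psi = (\<Sum>k<d. cnj (psi k) * psi k)" by (rule cinner_Cd) (simp add: Cd_def psi_def)
    also have "\<dots> = (\<Sum>k<d. of_real (q k))"
      by (intro sum.cong refl) (simp add: psi_def ssq mult.commute)
    also have "\<dots> = 1" using qs by (metis of_real_1 of_real_sum)
    finally show "cinner psi psi = 1" .
    show "unitary_on d (hh w)" by (rule hh_unitary[OF wT ww0])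
  qed
  have pU: "p_nonabs d e e psi (hh w) 0 = 1"
    unfolding p_nonabs_def unfolding veq hv unfolding Fv cvd by (simp add: dl_def)
  have pI: "p_nonabs d e e psi id i = q i" if "i < d" for i
    unfolding p_nonabs_def unfolding veq unfolding Fv using that by (simp add: cvd vd cmods)
  have "T_val d q (p_nonabs d e e psi) id (hh w) = 1"
    unfolding T_val_def pU by (simp add: pI)
  thus ?thesis using R by blast
qed


theorem mainTheorem3:
  fixes d :: nat and q :: "nat \<Rightarrow> real"
  assumes "d \<ge> 2"
    and "\<forall>i<d. 0 \<le> q i \<and> q i < 1"
    and "(\<Sum>i<d. q i) = 1"
  shows "(\<forall>(psis :: nat \<Rightarrow> nat \<Rightarrow> complex) (fs :: nat \<Rightarrow> 'h \<Rightarrow> complex) psi U.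
            realization d psis fs psi U \<longrightarrow>
            T_val d q (p_abs d psis fs psi) id U \<le> Max (q ` {..<d}))
       \<and> (\<exists>(psis :: nat \<Rightarrow> nat \<Rightarrow> complex) (fs :: nat \<Rightarrow> nat \<Rightarrow> complex) psi U.
            realization d psis fs psi U \<and>
            T_val d q (p_nonabs d psis fs psi) id U = 1)"
  using part1[OF assms(1,2)] part2[OF assms] by blast

end
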